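(* Let $H$ be a $P$-free 3-graph on vertex set $V$ containing a copy of $C$ with vertex set $U=\{x_1,x_2,x_3,y_1,y_2,y_3\}$ and edges $\{x_i,y_j,x_k\}$ for $\{i,j,k\}=\{1,2,3\}$, and let $W=V\setminus U$. Then the set $H(U,W)$ of all edges of $H$ meeting both $U$ and $W$ is an intersecting family, i.e. every two edges of $H(U,W)$ share at least one vertex.
   Context: All hypergraphs are 3-uniform. $P$ is the loose 3-uniform path of length 3: vertices $a,b,c,d,e,f,g$, edges $\{a,b,c\},\{c,d,e\},\{e,f,g\}$; $P$-free means no sub-3-graph isomorphic to $P$. $C$ is the loose triangle (three edges pairwise meeting in exactly one vertex, with six vertices in total). *)

theory Defs
  imports Main
begin

definition three_graph :: "'a set \<Rightarrow> 'a set set \<Rightarrow> bool" where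
  "three_graph V H \<longleftrightarrow> finite V \<and> (\<forall>e\<in>H. e \<subseteq> V \<and> card e = 3)"

text \<open>P is the loose path with edges abc, cde, efg on 7 distinct vertices.
  H contains a copy of P iff there are distinct a..g with these three edges in H.\<close>
definition P_free :: "'a set set \<Rightarrow> bool" where
  "P_free H \<longleftrightarrow> \<not> (\<exists>a b c d e f g. distinct [a, b, c, d, e, f, g] \<and>
       {a, b, c} \<in> H \<and> {c, d, e} \<in> H \<and> {e, f, g} \<in> H)"

definition cross_edges :: "'a set set \<Rightarrow> 'a set \<Rightarrow> 'a set \<Rightarrow> 'a set set" where
  "cross_edges H U W = {e \<in> H. e \<inter> U \<noteq> {} \<and> e \<inter> W \<noteq> {}}"

definition intersecting :: "'a set set \<Rightarrow> bool" where
  "intersecting F \<longleftrightarrow> (\<forall>e\<in>F. \<forall>f\<in>F. e \<inter> f \<noteq> {})"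

end

theory Submission
  imports Defs
begin

definition tri :: "'a set set \<Rightarrow> 'a \<Rightarrow> 'a \<Rightarrow> 'a \<Rightarrow> 'a \<Rightarrow> 'a \<Rightarrow> 'a \<Rightarrow> bool" where
  "tri H x1 x2 x3 y1 y2 y3 \<longleftrightarrow> distinct [x1, x2, x3, y1, y2, y3] \<and>
     {x1, y3, x2} \<in> H \<and> {x1, y2, x3} \<in> H \<and> {x2, y1, x3} \<in> H"

lemma tri12: "tri H x1 x2 x3 y1 y2 y3 \<Longrightarrow> tri H x2 x1 x3 y2 y1 y3"
  unfolding tri_def by (auto simp: insert_commute)
lemma tri13: "tri H x1 x2 x3 y1 y2 y3 \<Longrightarrow> tri H x3 x2 x1 y3 y2 y1"
  unfolding tri_def by (auto simp: insert_commute)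

lemma Pth: "P_free H \<Longrightarrow> distinct [a, b, c, d, e, f, g] \<Longrightarrow> {a, b, c} \<in> H \<Longrightarrow> {c, d, e} \<in> H
  \<Longrightarrow> {e, f, g} \<in> H \<Longrightarrow> False"
  unfolding P_free_def by blast

lemma Ly: assumes "P_free H" "tri H x1 x2 x3 y1 y2 y3" "{a, b, y1} \<in> H"
  "a \<notin> {x1, x2, x3, y1, y2, y3}" "b \<notin> {x1, x2, x3, y1}" "a \<noteq> b"
  shows False
proof (cases "b = y3")
  case False
  show False
    apply (rule Pth[OF assms(1), of a b y1 x3 x2 x1 y3])
    using assms False unfolding tri_def by (auto simp: insert_commute)
next
  case True
  show False
    apply (rule Pth[OF assms(1), of a b y1 x2 x3 x1 y2])
    using assms True unfolding tri_def by (auto simp: insert_commute)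
qed

lemma Lx: assumes "P_free H" "tri H x1 x2 x3 y1 y2 y3" "{a, b, x1} \<in> H"
  "a \<notin> {x1, x2, x3, y1, y2, y3}" "b \<notin> {x1, x2, x3, y1}" "a \<noteq> b"
  shows False
proof (cases "b = y3")
  case False
  show False
    apply (rule Pth[OF assms(1), of a b x1 y3 x2 y1 x3])
    using assms False unfolding tri_def by (auto simp: insert_commute)
next
  case True
  show False
    apply (rule Pth[OF assms(1), of a b x1 y2 x3 y1 x2])
    using assms True unfolding tri_def by (auto simp: insert_commute)
qed

lemma L1: assumes "P_free H" "tri H x1 x2 x3 y1 y2 y3" "{a, x1, x2} \<in> H" "{d, x3, y3} \<in> H"
  "a \<notin> {x1, x2, x3, y1, y2, y3}" "d \<notin> {x1, x2, x3, y1, y2, y3}" "a \<noteq> d"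
  shows False
  apply (rule Pth[OF assms(1), of a x1 x2 y1 x3 y3 d])
  using assms unfolding tri_def by (auto simp: insert_commute)

lemma L2: assumes "P_free H" "tri H x1 x2 x3 y1 y2 y3" "{a, x1, y1} \<in> H" "{d, x2, y2} \<in> H"
  "a \<notin> {x1, x2, x3, y1, y2, y3}" "d \<notin> {x1, x2, x3, y1, y2, y3}" "a \<noteq> d"
  shows False
  apply (rule Pth[OF assms(1), of a y1 x1 y3 x2 y2 d])
  using assms unfolding tri_def by (auto simp: insert_commute)

lemma classify: assumes "P_free H" "tri H x1 x2 x3 y1 y2 y3" "{a, b, c} \<in> H"
  "a \<notin> {x1, x2, x3, y1, y2, y3}" "distinct [a, b, c]" "b \<in> {x1, x2, x3, y1, y2, y3} \<or> c \<in> {x1, x2, x3, y1, y2, y3}"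
  shows "{b, c} \<in> {{x1, x2}, {x1, x3}, {x2, x3}, {x1, y1}, {x2, y2}, {x3, y3}}"
proof -
  have t2: "tri H x2 x1 x3 y2 y1 y3" by (rule tri12[OF assms(2)])
  have t3: "tri H x3 x2 x1 y3 y2 y1" by (rule tri13[OF assms(2)])
  have e2: "{a, c, b} \<in> H" using assms(3) by (simp add: insert_commute)
  have d: "distinct [x1, x2, x3, y1, y2, y3]" using assms(2) unfolding tri_def by simp
  have a1: "a \<notin> {x2, x1, x3, y2, y1, y3}" "a \<notin> {x3, x2, x1, y3, y2, y1}" using assms(4) by auto
  have ab: "a \<noteq> b" "a \<noteq> c" "b \<noteq> c" using assms(5) by auto
  have gen: "q = x1 \<or> q = x2 \<or> q = x3 \<or> (q = x1 \<and> r = y1) \<or> (q = x2 \<and> r = y2) \<or> (q = x3 \<and> r = y3) \<or> (r = x1 \<and> q = y1) \<or> (r = x2 \<and> q = y2) \<or> (r = x3 \<and> q = y3)"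
    if r: "r \<in> {x1, x2, x3, y1, y2, y3}" and e: "{a, q, r} \<in> H" and aq: "a \<noteq> q" and qr: "q \<noteq> r" for q r
  proof (rule ccontr)
    assume nc: "\<not> ?thesis"
    have "r = x1 \<or> r = x2 \<or> r = x3 \<or> r = y1 \<or> r = y2 \<or> r = y3" using r by simp
    then show False
    proof (elim disjE)
      assume "r = x1" then show False using Lx[OF assms(1,2) _ assms(4), of q] e nc aq qr by simp
    next
      assume "r = x2" then show False using Lx[OF assms(1) t2 _ a1(1), of q] e nc aq qr by auto
    next
      assume "r = x3" then show False using Lx[OF assms(1) t3 _ a1(2), of q] e nc aq qr by auto
    next
      assume "r = y1" then show False using Ly[OF assms(1,2) _ assms(4), of q] e nc aq qr by auto
    next
      assume "r = y2" then show False using Ly[OF assms(1) t2 _ a1(1), of q] e nc aq qr by auto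
    next
      assume "r = y3" then show False using Ly[OF assms(1) t3 _ a1(2), of q] e nc aq qr by auto
    qed
  qed
  show ?thesis
  proof (cases "b \<in> {x1, x2, x3, y1, y2, y3}")
    case True
    note g1 = gen[OF True e2 ab(2) ab(3)[symmetric]]
    show ?thesis
    proof (cases "c \<in> {x1, x2, x3, y1, y2, y3}")
      case True
      note g2 = gen[OF True assms(3) ab(1) ab(3)]
      show ?thesis using g1 g2 d ab(3) by (elim disjE conjE) (simp_all add: insert_commute)
    next
      case False then show ?thesis using g1 by auto
    qed
  next
    case False
    then have "c \<in> {x1, x2, x3, y1, y2, y3}" using assms(6) by blast
    note g2 = gen[OF this assms(3) ab(1) ab(3)]
    then show ?thesis using False by auto
  qed
qed

lemma tri23: "tri H x1 x2 x3 y1 y2 y3 \<Longrightarrow> tri H x1 x3 x2 y1 y3 y2"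
  unfolding tri_def by (auto simp: insert_commute)

lemma final: assumes P: "P_free H" and t: "tri H x1 x2 x3 y1 y2 y3"
  and S: "S \<in> {{x1, x2}, {x1, x3}, {x2, x3}, {x1, y1}, {x2, y2}, {x3, y3}}"
  and T: "T \<in> {{x1, x2}, {x1, x3}, {x2, x3}, {x1, y1}, {x2, y2}, {x3, y3}}"
  and eS: "insert a S \<in> H" and eT: "insert d T \<in> H"
  and a: "a \<notin> {x1, x2, x3, y1, y2, y3}" and d: "d \<notin> {x1, x2, x3, y1, y2, y3}" and ad: "a \<noteq> d"
  and ST: "S \<inter> T = {}"
  shows False
proof -
  have t2: "tri H x2 x1 x3 y2 y1 y3" by (rule tri12[OF t])
  have t3: "tri H x3 x2 x1 y3 y2 y1" by (rule tri13[OF t])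
  have t4: "tri H x1 x3 x2 y1 y3 y2" by (rule tri23[OF t])
  have dd: "distinct [x1, x2, x3, y1, y2, y3]" using t unfolding tri_def by simp
  have a1: "a \<notin> {x2, x1, x3, y2, y1, y3}" "a \<notin> {x3, x2, x1, y3, y2, y1}" "a \<notin> {x1, x3, x2, y1, y3, y2}" using a by auto
  have d1: "d \<notin> {x2, x1, x3, y2, y1, y3}" "d \<notin> {x3, x2, x1, y3, y2, y1}" "d \<notin> {x1, x3, x2, y1, y3, y2}" using d by auto
  have da: "d \<noteq> a" using ad by simp
  note I = L1[OF P t _ _ a d ad] L1[OF P t _ _ d a da]
           L1[OF P t3 _ _ a1(2) d1(2) ad] L1[OF P t3 _ _ d1(2) a1(2) da]
           L1[OF P t4 _ _ a1(3) d1(3) ad] L1[OF P t4 _ _ d1(3) a1(3) da]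
           L2[OF P t _ _ a d ad] L2[OF P t _ _ d a da]
           L2[OF P t3 _ _ a1(2) d1(2) ad] L2[OF P t3 _ _ d1(2) a1(2) da]
           L2[OF P t4 _ _ a1(3) d1(3) ad] L2[OF P t4 _ _ d1(3) a1(3) da]
  from S T show False
    apply (simp only: insert_iff empty_iff)
    apply (elim disjE)
    using eS eT ST dd I by (simp_all add: insert_commute)
qed

lemma decomp: assumes "card e = 3" "a \<in> e"
  obtains b c where "e = {a, b, c}" "distinct [a, b, c]"
proof -
  have "card (e - {a}) = 2" using assms by (simp add: card_Diff_singleton_if)
  then obtain b c where bc: "e - {a} = {b, c}" "b \<noteq> c" by (auto simp: card_2_iff)
  then have "e = {a, b, c}" using assms(2) by blast
  moreover have "distinct [a, b, c]" using bc by auto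
  ultimately show ?thesis using that by blast
qed

theorem mainTheorem8:
  fixes V :: "'a set" and H :: "'a set set" and x1 x2 x3 y1 y2 y3 :: 'a
  assumes "three_graph V H"
    and "P_free H"
    and "distinct [x1, x2, x3, y1, y2, y3]"
    and "{x1, x2, x3, y1, y2, y3} \<subseteq> V"
    and "{x1, y3, x2} \<in> H" and "{x1, y2, x3} \<in> H" and "{x2, y1, x3} \<in> H"
  shows "intersecting (cross_edges H {x1, x2, x3, y1, y2, y3} (V - {x1, x2, x3, y1, y2, y3}))"
  unfolding intersecting_def
proof (intro ballI notI)
  fix e f
  assume e: "e \<in> cross_edges H {x1, x2, x3, y1, y2, y3} (V - {x1, x2, x3, y1, y2, y3})"
    and f: "f \<in> cross_edges H {x1, x2, x3, y1, y2, y3} (V - {x1, x2, x3, y1, y2, y3})"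
    and ef: "e \<inter> f = {}"
  let ?U = "{x1, x2, x3, y1, y2, y3}"
  have t: "tri H x1 x2 x3 y1 y2 y3" using assms unfolding tri_def by simp
  have eH: "e \<in> H" "e \<inter> ?U \<noteq> {}" "e \<inter> (V - ?U) \<noteq> {}" using e unfolding cross_edges_def by auto
  have fH: "f \<in> H" "f \<inter> ?U \<noteq> {}" "f \<inter> (V - ?U) \<noteq> {}" using f unfolding cross_edges_def by auto
  obtain a where a: "a \<in> e" "a \<notin> ?U" using eH(3) by blast
  obtain d where d: "d \<in> f" "d \<notin> ?U" using fH(3) by blast
  have ce: "card e = 3" "card f = 3" using assms(1) eH(1) fH(1) unfolding three_graph_def by auto
  obtain b c where bc: "e = {a, b, c}" "distinct [a, b, c]" using decomp[OF ce(1) a(1)] by blast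
  obtain g h where gh: "f = {d, g, h}" "distinct [d, g, h]" using decomp[OF ce(2) d(1)] by blast
  have S: "{b, c} \<in> {{x1, x2}, {x1, x3}, {x2, x3}, {x1, y1}, {x2, y2}, {x3, y3}}"
    apply (rule classify[OF assms(2) t _ a(2) bc(2)])
    using bc eH a by auto
  have T: "{g, h} \<in> {{x1, x2}, {x1, x3}, {x2, x3}, {x1, y1}, {x2, y2}, {x3, y3}}"
    apply (rule classify[OF assms(2) t _ d(2) gh(2)])
    using gh fH d by auto
  show False
    apply (rule final[OF assms(2) t S T _ _ a(2) d(2)])
    using bc gh eH fH ef a d by auto
qed

end
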